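(* Let a memory system $M$ consist of one elementary system and an information system $I=I_1\cdots I_N$ of $N$ elementary systems, all with ontic coordinates in $\mathbb{Z}_d$ or all in $\mathbb{R}$; order the joint coordinates as $(q_M,p_M,q_{I_1},p_{I_1},\dots)$. Let the state of $I$ be an arbitrary valid epistemic state $(W,\vec w)$, with $W$ spanned by $\vec w_1,\dots,\vec w_k$. Let $S^M$ be a symplectic transformation of $I$ and $\vec f=((S^M)^T)^{-1}\vec q_1$, where $\vec q_1$ is the position observable of $I_1$; let $T$ be a symplectic transformation of $M$ and $\vec v=(T^T)^{-1}\vec q$, where $\vec q$ is the position observable of $M$. Let the memory initially be in the state where the value of $\vec v$ is $0$, so the total initial state is $\big(\langle(\vec v,0,\dots,0)^T,(0,0,\vec w_1)^T,\dots,(0,0,\vec w_k)^T\rangle,(0,0,\vec w)^T\big)$. Let $\Phi$ be the symplectic transformation acting on $M$ and $I_1$ (identity on $I_2,\dots,I_N$) by $(q_{I_1},p_{I_1},q_M,p_M)\mapsto(q_{I_1},\,p_{I_1}-p_M,\,q_M+q_{I_1},\,p_M)$. Then the transformation $$\Gamma=(T\oplus\mathbb{1}_I)(\mathbb{1}_M\oplus S^M)\,\Phi\,(\mathbb{1}_M\oplus (S^M)^{-1})(T^{-1}\oplus\mathbb{1}_I)$$ correlates the value of $\vec v$ on the memory with the value of $\vec f$ on the information system: in the final state, every compatible ontic state $\vec m=(\vec m_M,\vec m_I)$ satisfies $\vec v^T\vec m_M=\vec f^T\vec m_I$. Moreover, if $d$ is prime or the systems are continuous, the marginal of the final state on $I$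 (tracing out the memory) is the mixture of the post-measurement states corresponding to all possible outcomes (those with nonzero probability) of a measurement of $\vec f$ (i.e. of $V_\pi=\langle\vec f\rangle$) on $(W,\vec w)$.
   Context: Toy theory (quadrature formalism): ontic states $\vec m\in\Omega=\mathbb{Z}_d^{2n}$ or $\mathbb{R}^{2n}$, coordinates $(q_1,p_1,\dots,q_n,p_n)$; an observable $\vec f\in\Omega$ takes value $\vec f^T\vec m$; the position observable of the $i$-th elementary system is the vector with a 1 in coordinate $q_i$ and zeros elsewhere. Poisson bracket $[\vec f,\vec g]=\sum_i(f_{2i-1}g_{2i}-f_{2i}g_{2i-1})$; a matrix is symplectic if it preserves this bracket. A valid epistemic state $(V,\vec v)$ has $V$ an isotropic subspace/submodule ($[\vec f,\vec g]=0$ on $V$); compatible ontic states are $V^\perp+\vec v$ ($V^\perp=\{\vec m:\vec f^T\vec m=0\ \forall\vec f\in V\}$), uniformly distributed. A symplectic $\Gamma$ acts by $\vec m\mapsto\Gamma\vec m$ and $(V,\vec v)\mapsto((\Gamma^T)^{-1}V,\Gamma\vec v)$. Tracing out a subsystem = marginalizing the uniform distribution. A measurement is an isotropic $V_\pi$, outcome $\vec v_\pi$ = cell $V_\pi^\perp+\vec v_\pi$; post-measurement state: $(V_\pi+V_{\text{commute}},\vec v')$ with $V_{\text{commute}}=\{\vec f\in V:[\vec f,\vec g]=0\ \forall \vec g\in V_\pi\}$ and $\vec v'\in(V_\pi^\perp+\vec v_\pi)\cap(V_{\text{commute}}^\perp+\vec v)$. A mixture of epistemic states is the uniform distribution on the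 union of their compatible ontic sets. *)

theory Defs
  imports "Jordan_Normal_Form.Matrix" "HOL-Computational_Algebra.Primes"
begin

text \<open>Ring of ontic coordinates: either Z_d (d >= 2) or R, up to ring isomorphism.\<close>

definition is_Zd :: "'a::comm_ring_1 itself \<Rightarrow> nat \<Rightarrow> bool" where
  "is_Zd _ d \<longleftrightarrow> d \<ge> 2 \<and> (\<exists>\<phi>::'a \<Rightarrow> int. bij_betw \<phi> UNIV {0..<int d} \<and>
      \<phi> 1 = 1 \<and>
      (\<forall>x y. \<phi> (x + y) = (\<phi> x + \<phi> y) mod int d \<and> \<phi> (x * y) = (\<phi> x * \<phi> y) mod int d))"

definition is_R :: "'a::comm_ring_1 itself \<Rightarrow> bool" where
  "is_R _ \<longleftrightarrow> (\<exists>\<phi>::'a \<Rightarrow> real. bij \<phi> \<and> \<phi> 1 = 1 \<and>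
      (\<forall>x y. \<phi> (x + y) = \<phi> x + \<phi> y \<and> \<phi> (x * y) = \<phi> x * \<phi> y))"

text \<open>Vectors of n elementary systems live in carrier_vec (2*n), coordinates
  (q_1,p_1,...,q_n,p_n) at indices 0,1,...,2n-1.\<close>

definition poisson :: "nat \<Rightarrow> 'a::comm_ring_1 vec \<Rightarrow> 'a vec \<Rightarrow> 'a" where
  "poisson n f g = (\<Sum>i<n. f $ (2*i) * g $ (2*i+1) - f $ (2*i+1) * g $ (2*i))"

definition symplectic :: "nat \<Rightarrow> 'a::comm_ring_1 mat \<Rightarrow> bool" where
  "symplectic n S \<longleftrightarrow> S \<in> carrier_mat (2*n) (2*n) \<and>
     (\<forall>f \<in> carrier_vec (2*n). \<forall>g \<in> carrier_vec (2*n).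
        poisson n (S *\<^sub>v f) (S *\<^sub>v g) = poisson n f g)"

definition minv :: "nat \<Rightarrow> 'a::comm_ring_1 mat \<Rightarrow> 'a mat" where
  "minv m A = (THE B. B \<in> carrier_mat m m \<and> A * B = 1\<^sub>m m \<and> B * A = 1\<^sub>m m)"

definition dsum :: "'a::comm_ring_1 mat \<Rightarrow> 'a mat \<Rightarrow> 'a mat" (infixl \<open>\<oplus>\<^sub>m\<close> 70) where
  "A \<oplus>\<^sub>m B = four_block_mat A (0\<^sub>m (dim_row A) (dim_col B)) (0\<^sub>m (dim_row B) (dim_col A)) B"

definition lin_span :: "nat \<Rightarrow> 'a::comm_ring_1 vec list \<Rightarrow> 'a vec set" where
  "lin_span m gs = {foldr (+) (map (\<lambda>(c, g). c \<cdot>\<^sub>v g) (zip cs gs)) (0\<^sub>v m) | cs. length cs = length gs}"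

definition isotropic :: "nat \<Rightarrow> 'a::comm_ring_1 vec set \<Rightarrow> bool" where
  "isotropic n V \<longleftrightarrow> (\<forall>f\<in>V. \<forall>g\<in>V. poisson n f g = 0)"

definition submodule :: "nat \<Rightarrow> 'a::comm_ring_1 vec set \<Rightarrow> bool" where
  "submodule m V \<longleftrightarrow> V \<subseteq> carrier_vec m \<and> 0\<^sub>v m \<in> V \<and>
     (\<forall>f\<in>V. \<forall>g\<in>V. f + g \<in> V) \<and> (\<forall>c. \<forall>f\<in>V. c \<cdot>\<^sub>v f \<in> V)"

definition valid_state :: "nat \<Rightarrow> 'a::comm_ring_1 vec set \<Rightarrow> 'a vec \<Rightarrow> bool" where
  "valid_state n V v \<longleftrightarrow> submodule (2*n) V \<and> isotropic n V \<and> v \<in> carrier_vec (2*n)"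

definition perp :: "nat \<Rightarrow> 'a::comm_ring_1 vec set \<Rightarrow> 'a vec set" where
  "perp n V = {m \<in> carrier_vec (2*n). \<forall>f\<in>V. f \<bullet> m = 0}"

definition compat :: "nat \<Rightarrow> 'a::comm_ring_1 vec set \<Rightarrow> 'a vec \<Rightarrow> 'a vec set" where
  "compat n V v = {u + v | u. u \<in> perp n V}"

definition act_space :: "nat \<Rightarrow> 'a::comm_ring_1 mat \<Rightarrow> 'a vec set \<Rightarrow> 'a vec set" where
  "act_space n \<Gamma> V = (\<lambda>f. minv (2*n) (transpose_mat \<Gamma>) *\<^sub>v f) ` V"

definition act_vec :: "'a::comm_ring_1 mat \<Rightarrow> 'a vec \<Rightarrow> 'a vec" where
  "act_vec \<Gamma> v = \<Gamma> *\<^sub>v v"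

definition commuting_part :: "nat \<Rightarrow> 'a::comm_ring_1 vec set \<Rightarrow> 'a vec set \<Rightarrow> 'a vec set" where
  "commuting_part n V Vpi = {f \<in> V. \<forall>g\<in>Vpi. poisson n f g = 0}"

definition post_measurement :: "nat \<Rightarrow> 'a::comm_ring_1 vec set \<Rightarrow> 'a vec \<Rightarrow> 'a vec set \<Rightarrow> 'a vec
     \<Rightarrow> 'a vec set \<Rightarrow> 'a vec \<Rightarrow> bool" where
  "post_measurement n V v Vpi vpi V' v' \<longleftrightarrow>
     V' = {a + b | a b. a \<in> Vpi \<and> b \<in> commuting_part n V Vpi} \<and>
     v' \<in> compat n Vpi vpi \<inter> compat n (commuting_part n V Vpi) v"

definition possible_outcome :: "nat \<Rightarrow> 'a::comm_ring_1 vec set \<Rightarrow> 'a vec \<Rightarrow> 'a vec set \<Rightarrow> 'a vec \<Rightarrow> bool" where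
  "possible_outcome n V v Vpi vpi \<longleftrightarrow> vpi \<in> carrier_vec (2*n) \<and> compat n Vpi vpi \<inter> compat n V v \<noteq> {}"

text \<open>The CNOT-like map Phi on M (indices 0,1) and I_1 (indices 2,3):
  q_M' = q_M + q_I1, p_I1' = p_I1 - p_M, all else unchanged.\<close>
definition Phi :: "nat \<Rightarrow> 'a::comm_ring_1 mat" where
  "Phi N = mat (2 + 2*N) (2 + 2*N) (\<lambda>(i, j).
      if i = j then 1 else if (i, j) = (0, 2) then 1 else if (i, j) = (3, 1) then -1 else 0)"

end

theory Submission
  imports Defs "Jordan_Normal_Form.Determinant"
begin

lemma sum_pairs: "(\<Sum>j<2*n. a j) = (\<Sum>i<n. a (2*i) + a (2*i+1))"
  for a :: "nat \<Rightarrow> 'b::comm_monoid_add"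
proof (induction n)
  case 0 then show ?case by simp
next
  case (Suc n)
  have "2 * Suc n = Suc (Suc (2*n))" by simp
  then show ?case using Suc by (simp add: add.assoc)
qed

lemma sum_pairs': "(\<Sum>j\<in>{0..<2*n}. a j) = (\<Sum>i<n. a (2*i) + a (2*i+1))"
  for a :: "nat \<Rightarrow> 'b::comm_monoid_add"
  using sum_pairs[of a n] by (simp add: atLeast0LessThan)

definition Jmat :: "nat \<Rightarrow> 'a::comm_ring_1 mat" where
  "Jmat n = mat (2*n) (2*n) (\<lambda>(i,j). if even i \<and> j = i+1 then 1 else if odd i \<and> i = j+1 then -1 else 0)"

lemma Jmat_carrier[simp]: "Jmat n \<in> carrier_mat (2*n) (2*n)"
  unfolding Jmat_def by simp

lemma Jmat_dims[simp]: "dim_row (Jmat n) = 2*n" "dim_col (Jmat n) = 2*n"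
  unfolding Jmat_def by simp_all

lemma Jmat_index:
  assumes g: "g \<in> carrier_vec (2*n)" and i: "i < 2*n"
  shows "(Jmat n *\<^sub>v g) $ i = (if even i then g $ (i+1) else - g $ (i-1))"
proof -
  have "(Jmat n *\<^sub>v g) $ i = (\<Sum>j\<in>{0..<2*n}. Jmat n $$ (i,j) * g $ j)"
    using g i by (simp add: scalar_prod_def Jmat_def)
  also have "\<dots> = (\<Sum>j\<in>{0..<2*n}. (if j = (if even i then i+1 else i-1) then (if even i then g $ (i+1) else - g $ (i-1)) else 0))"
  proof (rule sum.cong)
    fix j assume j: "j \<in> {0..<2*n}"
    show "Jmat n $$ (i,j) * g $ j = (if j = (if even i then i+1 else i-1) then (if even i then g $ (i+1) else - g $ (i-1)) else 0)"
      using i j by (cases "even i") (auto simp: Jmat_def)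
  qed simp
  also have "\<dots> = (if even i then g $ (i+1) else - g $ (i-1))"
  proof (cases "even i")
    case True
    then have "i + 1 < 2*n" using i by (auto elim!: evenE)
    then show ?thesis using True by simp
  next
    case False
    then show ?thesis using i by simp
  qed
  finally show ?thesis .
qed

lemma Jmat_dim[simp]: "g \<in> carrier_vec (2*n) \<Longrightarrow> Jmat n *\<^sub>v g \<in> carrier_vec (2*n)"
  by (rule mult_mat_vec_carrier[OF Jmat_carrier])

lemma poisson_J:
  assumes f: "f \<in> carrier_vec (2*n)" and g: "g \<in> carrier_vec (2*n)"
  shows "poisson n f g = f \<bullet> (Jmat n *\<^sub>v g)"
proof -
  have d: "dim_vec (Jmat n *\<^sub>v g) = 2*n" by simp
  have "f \<bullet> (Jmat n *\<^sub>v g) = (\<Sum>j\<in>{0..<2*n}. f $ j * (Jmat n *\<^sub>v g) $ j)"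
    unfolding scalar_prod_def d ..
  also have "\<dots> = (\<Sum>i<n. f $ (2*i) * (Jmat n *\<^sub>v g) $ (2*i) + f $ (2*i+1) * (Jmat n *\<^sub>v g) $ (2*i+1))"
    by (rule sum_pairs')
  also have "\<dots> = poisson n f g"
    unfolding poisson_def by (rule sum.cong) (auto simp del: index_mult_mat_vec simp: Jmat_index[OF g])
  finally show ?thesis by simp
qed

lemma poisson_Jfirst:
  assumes g: "g \<in> carrier_vec (2*n)" and h: "h \<in> carrier_vec (2*n)"
  shows "poisson n (Jmat n *\<^sub>v g) h = g \<bullet> h"
proof -
  have "g \<bullet> h = (\<Sum>j\<in>{0..<2*n}. g $ j * h $ j)"
    using h by (simp add: scalar_prod_def)
  also have "\<dots> = (\<Sum>i<n. g $ (2*i) * h $ (2*i) + g $ (2*i+1) * h $ (2*i+1))"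
    by (rule sum_pairs')
  also have "\<dots> = poisson n (Jmat n *\<^sub>v g) h"
    unfolding poisson_def by (rule sum.cong) (auto simp del: index_mult_mat_vec simp: Jmat_index[OF g])
  finally show ?thesis by simp
qed

lemma poisson_antisym: "poisson n f g = - poisson n g f"
  unfolding poisson_def by (simp add: sum_negf[symmetric] algebra_simps)

lemma JJ:
  assumes b: "b \<in> carrier_vec (2*n)"
  shows "Jmat n *\<^sub>v (Jmat n *\<^sub>v b) = - b"
proof (rule eq_vecI)
  fix i assume "i < dim_vec (- b)"
  then have i: "i < 2*n" using b by simp
  show "(Jmat n *\<^sub>v (Jmat n *\<^sub>v b)) $ i = (- b) $ i"
  proof (cases "even i")
    case True
    then have "i + 1 < 2*n" using i by (auto elim!: evenE)
    then show ?thesis using True i b by (simp del: index_mult_mat_vec add: Jmat_index)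
  next
    case False
    then show ?thesis using i b by (auto simp del: index_mult_mat_vec simp: Jmat_index elim!: oddE)
  qed
qed (use b in simp)

lemma mat_eq_by_vec:
  fixes A B :: "'a::comm_ring_1 mat"
  assumes A: "A \<in> carrier_mat n m" and B: "B \<in> carrier_mat n m"
    and eq: "\<And>v. v \<in> carrier_vec m \<Longrightarrow> A *\<^sub>v v = B *\<^sub>v v"
  shows "A = B"
proof (rule eq_matI)
  fix i j assume i: "i < dim_row B" and j: "j < dim_col B"
  have "A $$ (i,j) = (A *\<^sub>v unit_vec m j) $ i" using A B i j by simp
  also have "\<dots> = (B *\<^sub>v unit_vec m j) $ i" using eq by simp
  also have "\<dots> = B $$ (i,j)" using B i j by simp
  finally show "A $$ (i,j) = B $$ (i,j)" .
qed (use A B in auto)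

lemma sympl_carrier: "symplectic n S \<Longrightarrow> S \<in> carrier_mat (2*n) (2*n)"
  unfolding symplectic_def by simp

lemma sympl_core:
  assumes S: "symplectic n S" and b: "b \<in> carrier_vec (2*n)"
  shows "transpose_mat S *\<^sub>v (Jmat n *\<^sub>v (S *\<^sub>v b)) = Jmat n *\<^sub>v b"
proof (rule eq_vecI)
  have Sc: "S \<in> carrier_mat (2*n) (2*n)" using S by (rule sympl_carrier)
  fix j assume "j < dim_vec (Jmat n *\<^sub>v b)"
  then have j: "j < 2*n" by simp
  let ?x = "Jmat n *\<^sub>v (S *\<^sub>v b)"
  have xc: "?x \<in> carrier_vec (2*n)" using Sc b by simp
  have ej: "unit_vec (2*n) j \<in> carrier_vec (2*n)" by simp
  have "(transpose_mat S *\<^sub>v ?x) $ j = (transpose_mat S *\<^sub>v ?x) \<bullet> unit_vec (2*n) j"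
    using j by simp
  also have "\<dots> = ?x \<bullet> (S *\<^sub>v unit_vec (2*n) j)"
    by (rule transpose_vec_mult_scalar[OF Sc ej xc])
  also have "\<dots> = (S *\<^sub>v unit_vec (2*n) j) \<bullet> ?x"
    by (rule comm_scalar_prod[OF xc]) (use Sc in simp)
  also have "\<dots> = poisson n (S *\<^sub>v unit_vec (2*n) j) (S *\<^sub>v b)"
    by (rule poisson_J[symmetric]) (use Sc b in simp_all)
  also have "\<dots> = poisson n (unit_vec (2*n) j) b"
    using S b unfolding symplectic_def by simp
  also have "\<dots> = unit_vec (2*n) j \<bullet> (Jmat n *\<^sub>v b)"
    by (rule poisson_J) (use b in simp_all)
  also have "\<dots> = (Jmat n *\<^sub>v b) $ j"
    using j b by simp
  finally show "(transpose_mat S *\<^sub>v ?x) $ j = (Jmat n *\<^sub>v b) $ j" .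
qed (use sympl_carrier[OF S] in simp)

lemma left_inv_right:
  fixes A L :: "'a::comm_ring_1 mat"
  assumes A: "A \<in> carrier_mat n n" and L: "L \<in> carrier_mat n n" and LA: "L * A = 1\<^sub>m n"
  shows "A * L = 1\<^sub>m n"
proof -
  have "det L * det A = 1" using det_mult[OF L A] LA by simp
  define R where "R = det L \<cdot>\<^sub>m adj_mat A"
  have Rc: "R \<in> carrier_mat n n" unfolding R_def using adj_mat(1)[OF A] by simp
  have "A * R = det L \<cdot>\<^sub>m (A * adj_mat A)"
    unfolding R_def by (rule mult_smult_distrib[OF A adj_mat(1)[OF A]])
  also have "\<dots> = det L \<cdot>\<^sub>m (det A \<cdot>\<^sub>m 1\<^sub>m n)" using adj_mat(2)[OF A] by simp
  also have "\<dots> = 1\<^sub>m n"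
    using \<open>det L * det A = 1\<close> by (intro eq_matI) auto
  finally have AR: "A * R = 1\<^sub>m n" .
  have "L = L * (A * R)" using AR L by simp
  also have "\<dots> = (L * A) * R" using L A Rc by simp
  also have "\<dots> = R" using LA Rc by simp
  finally show ?thesis using AR by simp
qed

lemma minv_eq:
  fixes A B :: "'a::comm_ring_1 mat"
  assumes A: "A \<in> carrier_mat n n" and B: "B \<in> carrier_mat n n"
    and AB: "A * B = 1\<^sub>m n" and BA: "B * A = 1\<^sub>m n"
  shows "minv n A = B"
  unfolding minv_def
proof (rule the_equality)
  fix C assume C: "C \<in> carrier_mat n n \<and> A * C = 1\<^sub>m n \<and> C * A = 1\<^sub>m n"
  have "C = C * (A * B)" using AB C by auto
  also have "\<dots> = (C * A) * B" by (rule assoc_mult_mat[symmetric]) (use A B C in auto)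
  also have "\<dots> = B" using C B by (auto simp del: assoc_mult_mat)
  finally show "C = B" .
qed (use assms in simp)

lemma sympl_inv:
  assumes S: "symplectic n S"
  shows "\<exists>L. L \<in> carrier_mat (2*n) (2*n) \<and> L * S = 1\<^sub>m (2*n) \<and> S * L = 1\<^sub>m (2*n)"
proof -
  have Sc: "S \<in> carrier_mat (2*n) (2*n)" using S by (rule sympl_carrier)
  define J where "J = (Jmat n :: 'a mat)"
  have Jc: "J \<in> carrier_mat (2*n) (2*n)" unfolding J_def by simp
  define L where "L = J * J * J * transpose_mat S * J"
  have Lc: "L \<in> carrier_mat (2*n) (2*n)" unfolding L_def using Jc Sc
    by (intro mult_carrier_mat transpose_carrier_mat) auto
  have LS: "L * S = 1\<^sub>m (2*n)"
  proof (rule mat_eq_by_vec[where n="2*n"])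
    fix b :: "'a vec" assume b: "b \<in> carrier_vec (2*n)"
    have St: "transpose_mat S \<in> carrier_mat (2*n) (2*n)" using Sc by simp
    have c1: "J * J \<in> carrier_mat (2*n) (2*n)" using Jc by simp
    have c2: "J * J * J \<in> carrier_mat (2*n) (2*n)" using c1 Jc by (rule mult_carrier_mat)
    have c3: "J * J * J * transpose_mat S \<in> carrier_mat (2*n) (2*n)" using c2 St by (rule mult_carrier_mat)
    have c4: "J * J * J * transpose_mat S * J \<in> carrier_mat (2*n) (2*n)" using c3 Jc by (rule mult_carrier_mat)
    have "(L * S) *\<^sub>v b = J *\<^sub>v (J *\<^sub>v (J *\<^sub>v (transpose_mat S *\<^sub>v (J *\<^sub>v (S *\<^sub>v b)))))"
      unfolding L_def
      apply (subst assoc_mult_mat_vec[OF c4 Sc b])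
      apply (subst assoc_mult_mat_vec[OF c3 Jc], use Sc b in simp)
      apply (subst assoc_mult_mat_vec[OF c2 St], use Jc Sc b in simp)
      apply (subst assoc_mult_mat_vec[OF c1 Jc], use St Jc Sc b in simp)
      apply (subst assoc_mult_mat_vec[OF Jc Jc], use Jc St Jc Sc b in simp)
      apply (rule refl)
      done
    also have "\<dots> = J *\<^sub>v (J *\<^sub>v (J *\<^sub>v (J *\<^sub>v b)))"
      using sympl_core[OF S b] unfolding J_def by simp
    also have "\<dots> = b" unfolding J_def using b by (simp add: JJ)
    finally show "(L * S) *\<^sub>v b = 1\<^sub>m (2*n) *\<^sub>v b" using b by simp
  qed (use mult_carrier_mat[OF Lc Sc] in simp_all)
  then show ?thesis using Lc left_inv_right[OF Sc Lc LS] by blast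
qed

lemma dsum_carrier:
  assumes "A \<in> carrier_mat n n" "B \<in> carrier_mat m m"
  shows "A \<oplus>\<^sub>m B \<in> carrier_mat (n+m) (n+m)"
  using assms unfolding dsum_def by (auto intro!: four_block_carrier_mat)

lemma dsum_mult_vec:
  assumes A: "A \<in> carrier_mat n n" and B: "B \<in> carrier_mat m m"
    and a: "a \<in> carrier_vec n" and b: "b \<in> carrier_vec m"
  shows "(A \<oplus>\<^sub>m B) *\<^sub>v (a @\<^sub>v b) = (A *\<^sub>v a) @\<^sub>v (B *\<^sub>v b)"
proof -
  have "A \<oplus>\<^sub>m B = four_block_mat A (0\<^sub>m n m) (0\<^sub>m m n) B"
    unfolding dsum_def using A B by simp
  then show ?thesis using mult_mat_vec_split[OF A B a b] by simp
qed

definition PhiG :: "'a::comm_ring_1 \<Rightarrow> 'a \<Rightarrow> nat \<Rightarrow> 'a mat" where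
  "PhiG c1 c2 N = mat (2 + 2*N) (2 + 2*N) (\<lambda>(i, j).
      if i = j then 1 else if (i, j) = (0, 2) then c1 else if (i, j) = (3, 1) then c2 else 0)"

lemma Phi_PhiG: "Phi N = PhiG 1 (-1) N"
  unfolding Phi_def PhiG_def ..

lemma PhiG_carrier[simp]: "PhiG c1 c2 N \<in> carrier_mat (2 + 2*N) (2 + 2*N)"
  unfolding PhiG_def by simp

lemma PhiG_dims[simp]: "dim_row (PhiG c1 c2 N) = 2 + 2*N" "dim_col (PhiG c1 c2 N) = 2 + 2*N"
  unfolding PhiG_def by simp_all

lemma PhiG_index:
  assumes N: "N \<ge> 1" and z: "z \<in> carrier_vec (2 + 2*N)" and i: "i < 2 + 2*N"
  shows "(PhiG c1 c2 N *\<^sub>v z) $ i = z $ i + (if i = 0 then c1 * z $ 2 else 0) + (if i = 3 then c2 * z $ 1 else 0)"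
proof -
  have "(PhiG c1 c2 N *\<^sub>v z) $ i = (\<Sum>j\<in>{0..<2+2*N}. row (PhiG c1 c2 N) i $ j * z $ j)"
    using i z by (simp add: scalar_prod_def)
  also have "\<dots> = (\<Sum>j\<in>{0..<2+2*N}. (if j = i then z $ i else 0)
      + (if j = 2 then (if i = 0 then c1 * z $ 2 else 0) else 0)
      + (if j = 1 then (if i = 3 then c2 * z $ 1 else 0) else 0))"
    by (rule sum.cong) (use i in \<open>auto simp: PhiG_def\<close>)
  also have "\<dots> = z $ i + (if i = 0 then c1 * z $ 2 else 0) + (if i = 3 then c2 * z $ 1 else 0)"
    using i N by (simp add: sum.distrib)
  finally show ?thesis .
qed

lemma PhiG_mult_vec:
  assumes N: "N \<ge> 1" and x: "x \<in> carrier_vec 2" and y: "y \<in> carrier_vec (2*N)"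
  shows "PhiG c1 c2 N *\<^sub>v (x @\<^sub>v y) =
    vec 2 (\<lambda>i. if i = 0 then x$0 + c1 * y$0 else x$1) @\<^sub>v
    vec (2*N) (\<lambda>j. if j = 1 then y$1 + c2 * x$1 else y$j)"
  (is "_ = ?R")
proof (rule eq_vecI)
  have zc: "x @\<^sub>v y \<in> carrier_vec (2 + 2*N)" using x y by (rule append_carrier_vec)
  fix i assume "i < dim_vec ?R"
  then have i: "i < 2 + 2*N" by simp
  show "(PhiG c1 c2 N *\<^sub>v (x @\<^sub>v y)) $ i = ?R $ i"
    unfolding PhiG_index[OF N zc i]
    using i x y N by (cases "i < 2"; cases "i = 0"; cases "i = 1") (auto simp: nth_append)
qed simp

abbreviation lcomb :: "nat \<Rightarrow> 'a::comm_ring_1 list \<Rightarrow> 'a vec list \<Rightarrow> 'a vec" where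
  "lcomb m cs gs \<equiv> foldr (+) (map (\<lambda>(c, g). c \<cdot>\<^sub>v g) (zip cs gs)) (0\<^sub>v m)"

lemma LS_foldr:
  assumes "set gs \<subseteq> carrier_vec m" "length cs = length gs"
  shows "lcomb m cs gs \<in> carrier_vec m \<and>
     (\<forall>u \<in> carrier_vec m. (\<forall>g\<in>set gs. g \<bullet> u = 0) \<longrightarrow> lcomb m cs gs \<bullet> u = 0)"
  using assms
proof (induction gs arbitrary: cs)
  case Nil then show ?case by simp
next
  case (Cons g gs)
  then obtain c cs' where cs: "cs = c # cs'" "length cs' = length gs"
    by (cases cs) auto
  have g: "g \<in> carrier_vec m" using Cons.prems by simp
  from Cons.IH[of cs'] Cons.prems cs have IH:
    "lcomb m cs' gs \<in> carrier_vec m"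
    "\<forall>u \<in> carrier_vec m. (\<forall>g\<in>set gs. g \<bullet> u = 0) \<longrightarrow> lcomb m cs' gs \<bullet> u = 0"
    by auto
  have eq: "lcomb m cs (g # gs) = c \<cdot>\<^sub>v g + lcomb m cs' gs" using cs by simp
  show ?case
  proof (intro conjI ballI impI)
    show "lcomb m cs (g # gs) \<in> carrier_vec m" unfolding eq using g IH by simp
  next
    fix u :: "'a vec" assume u: "u \<in> carrier_vec m" and o: "\<forall>h\<in>set (g # gs). h \<bullet> u = 0"
    have "lcomb m cs (g # gs) \<bullet> u = (c \<cdot>\<^sub>v g) \<bullet> u + lcomb m cs' gs \<bullet> u"
      unfolding eq by (rule add_scalar_prod_distrib[of _ m]) (use g IH u in simp_all)
    also have "\<dots> = 0" using IH(2) u o g by simp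
    finally show "lcomb m cs (g # gs) \<bullet> u = 0" .
  qed
qed

lemma LS_carrier: "set gs \<subseteq> carrier_vec m \<Longrightarrow> x \<in> lin_span m gs \<Longrightarrow> x \<in> carrier_vec m"
  unfolding lin_span_def using LS_foldr by blast

lemma LS_orth: "set gs \<subseteq> carrier_vec m \<Longrightarrow> x \<in> lin_span m gs \<Longrightarrow> u \<in> carrier_vec m \<Longrightarrow>
   (\<forall>g\<in>set gs. g \<bullet> u = 0) \<Longrightarrow> x \<bullet> u = 0"
  unfolding lin_span_def using LS_foldr by blast

lemma LS_zero: "set gs \<subseteq> carrier_vec m \<Longrightarrow> lcomb m (replicate (length gs) 0) gs = 0\<^sub>v m"
proof (induction gs)
  case Nil then show ?case by simp
next
  case (Cons g gs)
  then have "lcomb m (replicate (length gs) 0) gs = 0\<^sub>v m" by simp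
  then show ?case using Cons.prems by (auto intro!: eq_vecI)
qed

lemma LS_gen: "set gs \<subseteq> carrier_vec m \<Longrightarrow> g \<in> set gs \<Longrightarrow> g \<in> lin_span m gs"
proof (induction gs)
  case Nil then show ?case by simp
next
  case (Cons h gs)
  show ?case
  proof (cases "g = h")
    case True
    have "lcomb m (1 # replicate (length gs) 0) (h # gs) = 1 \<cdot>\<^sub>v h + 0\<^sub>v m"
      using LS_zero[of gs m] Cons.prems by simp
    also have "\<dots> = g" using True Cons.prems by (auto intro!: eq_vecI)
    finally show ?thesis unfolding lin_span_def
      by (intro CollectI exI[of _ "1 # replicate (length gs) 0"]) auto
  next
    case False
    then have "g \<in> lin_span m gs" using Cons by simp
    then obtain cs where cs: "length cs = length gs" "g = lcomb m cs gs"
      unfolding lin_span_def by blast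
    have gc: "lcomb m cs gs \<in> carrier_vec m" using LS_foldr[of gs m cs] Cons.prems cs by simp
    have "lcomb m (0 # cs) (h # gs) = 0 \<cdot>\<^sub>v h + lcomb m cs gs" by simp
    also have "\<dots> = g" using cs gc Cons.prems by (auto intro!: eq_vecI)
    finally show ?thesis unfolding lin_span_def
      by (intro CollectI exI[of _ "0 # cs"]) (use cs in auto)
  qed
qed

lemma span_single:
  assumes f: "f \<in> carrier_vec m"
  shows "lin_span m [f] = {c \<cdot>\<^sub>v f | c. True}"
proof -
  have eq: "c \<cdot>\<^sub>v f + 0\<^sub>v m = c \<cdot>\<^sub>v f" for c using f by (auto intro!: eq_vecI)
  show ?thesis unfolding lin_span_def
  proof safe
    fix cs :: "'a list" assume "length cs = length [f]"
    then obtain c where "cs = [c]" by (cases cs) auto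
    then show "\<exists>c. lcomb m cs [f] = c \<cdot>\<^sub>v f \<and> True" using eq by auto
  next
    fix c
    show "\<exists>cs. c \<cdot>\<^sub>v f = lcomb m cs [f] \<and> length cs = length [f]"
      using eq by (intro exI[of _ "[c]"]) auto
  qed
qed

lemma field_inv:
  assumes "(\<exists>d. is_Zd TYPE('a::comm_ring_1) d \<and> prime d) \<or> is_R TYPE('a)"
  shows "\<forall>a::'a. a \<noteq> 0 \<longrightarrow> (\<exists>b. a * b = 1)"
  using assms
proof
  assume "\<exists>d. is_Zd TYPE('a) d \<and> prime d"
  then obtain d \<phi> where d2: "d \<ge> 2" and pd: "prime d" and bij: "bij_betw (\<phi>::'a\<Rightarrow>int) UNIV {0..<int d}"
    and one: "\<phi> 1 = 1" and hom: "\<And>x y. \<phi> (x + y) = (\<phi> x + \<phi> y) mod int d \<and> \<phi> (x * y) = (\<phi> x * \<phi> y) mod int d"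
    unfolding is_Zd_def by blast
  have rng: "\<phi> x \<in> {0..<int d}" for x using bij by (auto dest: bij_betw_apply)
  have inj: "\<phi> x = \<phi> y \<Longrightarrow> x = y" for x y using bij unfolding bij_betw_def inj_on_def by blast
  have phi0: "\<phi> 0 = 0"
  proof -
    have e: "(\<phi> 0 + \<phi> 0) mod int d = \<phi> 0 mod int d"
      using hom[of 0 0] rng[of 0] by simp
    have "int d dvd \<phi> 0"
      using e by (simp add: mod_eq_dvd_iff)
    then show ?thesis using rng[of 0] by (auto dest: zdvd_imp_le)
  qed
  show ?thesis
  proof (intro allI impI)
    fix a :: 'a assume a: "a \<noteq> 0"
    have pa: "\<phi> a \<noteq> 0" using a inj phi0 by metis
    define k where "k = nat (\<phi> a)"
    have kk: "int k = \<phi> a" using rng[of a] unfolding k_def by simp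
    have k0: "0 < k" "k < d" using rng[of a] pa kk by auto
    have "\<not> d dvd k" using k0 by (auto dest: dvd_imp_le)
    then obtain x y where xy: "k * x = Suc (d * y)" using bezout_prime[OF pd] by blast
    then have xyi: "\<phi> a * int x = 1 + int d * int y" using kk
      by (metis of_nat_Suc of_nat_mult add.commute)
    define c where "c = int x mod int d"
    have "c \<in> {0..<int d}" unfolding c_def using d2 by simp
    then obtain b where b: "\<phi> b = c" using bij unfolding bij_betw_def by (metis imageE)
    have "\<phi> (a * b) = (\<phi> a * c) mod int d" using hom b by simp
    also have "\<dots> = (\<phi> a * int x) mod int d" unfolding c_def by (simp add: mod_mult_right_eq)
    also have "\<dots> = 1" using xyi d2 by simp
    finally have "\<phi> (a * b) = \<phi> 1" using one by simp
    then show "\<exists>b. a * b = 1" using inj by blast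
  qed
next
  assume "is_R TYPE('a)"
  then obtain \<phi> :: "'a \<Rightarrow> real" where bij: "bij \<phi>" and one: "\<phi> 1 = 1"
    and hom: "\<And>x y. \<phi> (x + y) = \<phi> x + \<phi> y \<and> \<phi> (x * y) = \<phi> x * \<phi> y"
    unfolding is_R_def by blast
  have inj: "\<phi> x = \<phi> y \<Longrightarrow> x = y" for x y using bij unfolding bij_def inj_def by blast
  have phi0: "\<phi> 0 = 0" using hom[of 0 0] by simp
  show ?thesis
  proof (intro allI impI)
    fix a :: 'a assume a: "a \<noteq> 0"
    have pa: "\<phi> a \<noteq> 0" using a inj phi0 by metis
    obtain b where b: "\<phi> b = 1 / \<phi> a" using bij unfolding bij_def surj_def by metis
    have "\<phi> (a * b) = \<phi> 1" using hom b pa one by simp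
    then show "\<exists>b. a * b = 1" using inj by blast
  qed
qed

lemma vec_first_app: "a \<in> carrier_vec n \<Longrightarrow> vec_first (a @\<^sub>v b) n = a"
  unfolding vec_first_def by (auto intro!: eq_vecI)

lemma vec_last_app: "b \<in> carrier_vec m \<Longrightarrow> vec_last (a @\<^sub>v b) m = b"
  unfolding vec_last_def by (auto intro!: eq_vecI)

lemma scalar_zero_r[simp]: "v \<bullet> 0\<^sub>v n = 0"
  unfolding scalar_prod_def by simp

lemma mult_smult_vec:
  fixes A :: "'a::comm_ring_1 mat"
  assumes A: "A \<in> carrier_mat nr nc" and v: "v \<in> carrier_vec nc"
  shows "A *\<^sub>v (k \<cdot>\<^sub>v v) = k \<cdot>\<^sub>v (A *\<^sub>v v)"
proof (rule eq_vecI)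
  fix i assume "i < dim_vec (k \<cdot>\<^sub>v (A *\<^sub>v v))"
  then have i: "i < nr" using A by simp
  have r: "row A i \<in> carrier_vec nc" using A i by simp
  show "(A *\<^sub>v (k \<cdot>\<^sub>v v)) $ i = (k \<cdot>\<^sub>v (A *\<^sub>v v)) $ i"
    using i A scalar_prod_smult_distrib[OF r v] by simp
qed (use A in simp)

lemma compat_carrier: "w \<in> carrier_vec (2*n) \<Longrightarrow> m \<in> compat n V w \<Longrightarrow> m \<in> carrier_vec (2*n)"
  unfolding compat_def perp_def by auto

lemma poisson_smult_r:
  assumes f: "f \<in> carrier_vec (2*n)"
  shows "poisson n g (c \<cdot>\<^sub>v f) = c * poisson n g f"
  unfolding poisson_def sum_distrib_left
  by (rule sum.cong) (use f in \<open>auto simp: algebra_simps\<close>)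

definition GG :: "nat \<Rightarrow> 'a::comm_ring_1 mat \<Rightarrow> 'a mat \<Rightarrow> 'a mat \<Rightarrow> 'a mat \<Rightarrow> 'a \<Rightarrow> 'a \<Rightarrow> 'a mat" where
  "GG N T Ti S Si c1 c2 = (T \<oplus>\<^sub>m 1\<^sub>m (2*N)) * (1\<^sub>m 2 \<oplus>\<^sub>m S) * PhiG c1 c2 N * (1\<^sub>m 2 \<oplus>\<^sub>m Si) * (Ti \<oplus>\<^sub>m 1\<^sub>m (2*N))"

lemma GG_facts:
  assumes N: "N \<ge> 1" and T: "T \<in> carrier_mat 2 2" and Ti: "Ti \<in> carrier_mat 2 2"
    and S: "S \<in> carrier_mat (2*N) (2*N)" and Si: "Si \<in> carrier_mat (2*N) (2*N)"
  shows "GG N T Ti S Si p q \<in> carrier_mat (2+2*N) (2+2*N)"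
    and "x \<in> carrier_vec 2 \<Longrightarrow> y \<in> carrier_vec (2*N) \<Longrightarrow>
      GG N T Ti S Si p q *\<^sub>v (x @\<^sub>v y) =
      (T *\<^sub>v vec 2 (\<lambda>i. if i = 0 then (Ti *\<^sub>v x)$0 + p * (Si *\<^sub>v y)$0 else (Ti *\<^sub>v x)$1)) @\<^sub>v
      (S *\<^sub>v vec (2*N) (\<lambda>j. if j = 1 then (Si *\<^sub>v y)$1 + q * (Ti *\<^sub>v x)$1 else (Si *\<^sub>v y)$j))"
proof -
  let ?n = "2 + 2*N"
  have X1: "T \<oplus>\<^sub>m 1\<^sub>m (2*N) \<in> carrier_mat ?n ?n" using dsum_carrier[OF T one_carrier_mat[of "2*N"]] by simp
  have X2: "1\<^sub>m 2 \<oplus>\<^sub>m S \<in> carrier_mat ?n ?n" using dsum_carrier[OF one_carrier_mat[of 2] S] by simp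
  have X3: "1\<^sub>m 2 \<oplus>\<^sub>m Si \<in> carrier_mat ?n ?n" using dsum_carrier[OF one_carrier_mat[of 2] Si] by simp
  have X4: "Ti \<oplus>\<^sub>m 1\<^sub>m (2*N) \<in> carrier_mat ?n ?n" using dsum_carrier[OF Ti one_carrier_mat[of "2*N"]] by simp
  have P: "PhiG p q N \<in> carrier_mat ?n ?n" by (rule PhiG_carrier)
  have Y1: "(T \<oplus>\<^sub>m 1\<^sub>m (2*N)) * (1\<^sub>m 2 \<oplus>\<^sub>m S) \<in> carrier_mat ?n ?n"
    using X1 X2 by (rule mult_carrier_mat)
  have Y2: "(T \<oplus>\<^sub>m 1\<^sub>m (2*N)) * (1\<^sub>m 2 \<oplus>\<^sub>m S) * PhiG p q N \<in> carrier_mat ?n ?n"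
    using Y1 P by (rule mult_carrier_mat)
  have Y3: "(T \<oplus>\<^sub>m 1\<^sub>m (2*N)) * (1\<^sub>m 2 \<oplus>\<^sub>m S) * PhiG p q N * (1\<^sub>m 2 \<oplus>\<^sub>m Si) \<in> carrier_mat ?n ?n"
    using Y2 X3 by (rule mult_carrier_mat)
  show Y4: "GG N T Ti S Si p q \<in> carrier_mat ?n ?n"
    unfolding GG_def using Y3 X4 by (rule mult_carrier_mat)
  assume x: "x \<in> carrier_vec 2" and y: "y \<in> carrier_vec (2*N)"
  have z: "x @\<^sub>v y \<in> carrier_vec ?n" using x y by (rule append_carrier_vec)
  have s4: "(Ti \<oplus>\<^sub>m 1\<^sub>m (2*N)) *\<^sub>v (x @\<^sub>v y) = (Ti *\<^sub>v x) @\<^sub>v y"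
    using dsum_mult_vec[OF Ti one_carrier_mat x y] y by simp
  have s3: "(1\<^sub>m 2 \<oplus>\<^sub>m Si) *\<^sub>v ((Ti *\<^sub>v x) @\<^sub>v y) = (Ti *\<^sub>v x) @\<^sub>v (Si *\<^sub>v y)"
    using dsum_mult_vec[OF one_carrier_mat Si _ y, of "Ti *\<^sub>v x"] Ti x by simp
  have s2: "PhiG p q N *\<^sub>v ((Ti *\<^sub>v x) @\<^sub>v (Si *\<^sub>v y)) =
    vec 2 (\<lambda>i. if i = 0 then (Ti *\<^sub>v x)$0 + p * (Si *\<^sub>v y)$0 else (Ti *\<^sub>v x)$1) @\<^sub>v
    vec (2*N) (\<lambda>j. if j = 1 then (Si *\<^sub>v y)$1 + q * (Ti *\<^sub>v x)$1 else (Si *\<^sub>v y)$j)"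
    by (rule PhiG_mult_vec[OF N]) (use Ti x Si y in simp_all)
  have s1: "(1\<^sub>m 2 \<oplus>\<^sub>m S) *\<^sub>v (a @\<^sub>v b) = a @\<^sub>v (S *\<^sub>v b)"
    if "a \<in> carrier_vec 2" "b \<in> carrier_vec (2*N)" for a b
    using dsum_mult_vec[OF one_carrier_mat S that] that by simp
  have s0: "(T \<oplus>\<^sub>m 1\<^sub>m (2*N)) *\<^sub>v (a @\<^sub>v b) = (T *\<^sub>v a) @\<^sub>v b"
    if "a \<in> carrier_vec 2" "b \<in> carrier_vec (2*N)" for a b
    using dsum_mult_vec[OF T one_carrier_mat that] that by simp
  show "GG N T Ti S Si p q *\<^sub>v (x @\<^sub>v y) =
      (T *\<^sub>v vec 2 (\<lambda>i. if i = 0 then (Ti *\<^sub>v x)$0 + p * (Si *\<^sub>v y)$0 else (Ti *\<^sub>v x)$1)) @\<^sub>v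
      (S *\<^sub>v vec (2*N) (\<lambda>j. if j = 1 then (Si *\<^sub>v y)$1 + q * (Ti *\<^sub>v x)$1 else (Si *\<^sub>v y)$j))"
    unfolding GG_def
    apply (subst assoc_mult_mat_vec[OF Y3 X4 z])
    apply (subst assoc_mult_mat_vec[OF Y2 X3], use X4 z in simp)
    apply (subst assoc_mult_mat_vec[OF Y1 P], use X3 X4 z in simp)
    apply (subst assoc_mult_mat_vec[OF X1 X2], use P X3 X4 z in simp)
    apply (simp only: s4 s3 s2)
    apply (subst s1, simp, simp)
    apply (subst s0, use S in simp_all)
    done
qed

lemma inv_cancel:
  fixes A B :: "'a::comm_ring_1 mat"
  assumes "A * B = 1\<^sub>m n" "A \<in> carrier_mat n n" "B \<in> carrier_mat n n" "v \<in> carrier_vec n"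
  shows "A *\<^sub>v (B *\<^sub>v v) = v"
  using assoc_mult_mat_vec[OF assms(2-4)] assms(1,4) by simp

lemma GG_inv:
  assumes N: "N \<ge> 1" and T: "T \<in> carrier_mat 2 2" and Ti: "Ti \<in> carrier_mat 2 2"
    and S: "S \<in> carrier_mat (2*N) (2*N)" and Si: "Si \<in> carrier_mat (2*N) (2*N)"
    and TiT: "Ti * T = 1\<^sub>m 2" and TTi: "T * Ti = 1\<^sub>m 2"
    and SiS: "Si * S = 1\<^sub>m (2*N)" and SSi: "S * Si = 1\<^sub>m (2*N)"
  shows "GG N T Ti S Si (-1) 1 * GG N T Ti S Si 1 (-1) = 1\<^sub>m (2+2*N)"
proof (rule mat_eq_by_vec[where n = "2+2*N"])
  note G1 = GG_facts[OF N T Ti S Si, where p = 1 and q = "-1"]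
  note G2 = GG_facts[OF N T Ti S Si, where p = "-1" and q = 1]
  show "GG N T Ti S Si (-1) 1 * GG N T Ti S Si 1 (-1) \<in> carrier_mat (2+2*N) (2+2*N)"
    using G2(1) G1(1) by (rule mult_carrier_mat)
  show "1\<^sub>m (2+2*N) \<in> carrier_mat (2+2*N) (2+2*N)" by simp
  fix z :: "'a vec" assume z: "z \<in> carrier_vec (2+2*N)"
  define x where "x = vec_first z 2"
  define y where "y = vec_last z (2*N)"
  have x: "x \<in> carrier_vec 2" and y: "y \<in> carrier_vec (2*N)" unfolding x_def y_def by simp_all
  have zxy: "z = x @\<^sub>v y" unfolding x_def y_def using z by simp
  define a where "a = Ti *\<^sub>v x"
  define b where "b = Si *\<^sub>v y"
  have a: "a \<in> carrier_vec 2" unfolding a_def using Ti x by simp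
  have b: "b \<in> carrier_vec (2*N)" unfolding b_def using Si y by simp
  define a' where "a' = vec 2 (\<lambda>i. if i = 0 then a$0 + 1 * b$0 else a$1)"
  define b' where "b' = vec (2*N) (\<lambda>j. if j = 1 then b$1 + (-1) * a$1 else b$j)"
  have a': "a' \<in> carrier_vec 2" and b': "b' \<in> carrier_vec (2*N)" unfolding a'_def b'_def by simp_all
  have e1: "GG N T Ti S Si 1 (-1) *\<^sub>v (x @\<^sub>v y) = (T *\<^sub>v a') @\<^sub>v (S *\<^sub>v b')"
    unfolding a'_def b'_def a_def b_def by (rule G1(2)[OF x y])
  have ia: "Ti *\<^sub>v (T *\<^sub>v a') = a'" by (rule inv_cancel[OF TiT Ti T a'])
  have ib: "Si *\<^sub>v (S *\<^sub>v b') = b'" by (rule inv_cancel[OF SiS Si S b'])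
  have e2: "GG N T Ti S Si (-1) 1 *\<^sub>v ((T *\<^sub>v a') @\<^sub>v (S *\<^sub>v b')) =
     (T *\<^sub>v vec 2 (\<lambda>i. if i = 0 then a'$0 + (-1) * b'$0 else a'$1)) @\<^sub>v
     (S *\<^sub>v vec (2*N) (\<lambda>j. if j = 1 then b'$1 + 1 * a'$1 else b'$j))"
    using G2(2)[OF mult_mat_vec_carrier[OF T a'] mult_mat_vec_carrier[OF S b']] unfolding ia ib by simp
  have aa: "vec 2 (\<lambda>i. if i = 0 then a'$0 + (-1) * b'$0 else a'$1) = a"
    using a N unfolding a'_def b'_def by (auto intro!: eq_vecI simp: less_2_cases_iff)
  have bb: "vec (2*N) (\<lambda>j. if j = 1 then b'$1 + 1 * a'$1 else b'$j) = b"
    using b N unfolding a'_def b'_def by (auto intro!: eq_vecI)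
  have "(GG N T Ti S Si (-1) 1 * GG N T Ti S Si 1 (-1)) *\<^sub>v z
      = GG N T Ti S Si (-1) 1 *\<^sub>v (GG N T Ti S Si 1 (-1) *\<^sub>v z)"
    by (rule assoc_mult_mat_vec[OF G2(1) G1(1) z])
  also have "\<dots> = (T *\<^sub>v a) @\<^sub>v (S *\<^sub>v b)" unfolding zxy e1 e2 aa bb ..
  also have "\<dots> = x @\<^sub>v y" unfolding a_def b_def
    using inv_cancel[OF TTi T Ti x] inv_cancel[OF SSi S Si y] by simp
  finally show "(GG N T Ti S Si (-1) 1 * GG N T Ti S Si 1 (-1)) *\<^sub>v z = 1\<^sub>m (2+2*N) *\<^sub>v z"
    using z zxy by simp
qed

lemma Je1:
  assumes N: "N \<ge> 1"
  shows "Jmat N *\<^sub>v unit_vec (2*N) 1 = (unit_vec (2*N) 0 :: 'a::comm_ring_1 vec)"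
proof (rule eq_vecI)
  fix i assume "i < dim_vec (unit_vec (2*N) 0 :: 'a vec)"
  then have i: "i < 2*N" by simp
  show "(Jmat N *\<^sub>v unit_vec (2*N) 1) $ i = (unit_vec (2*N) 0 :: 'a vec) $ i"
  proof (cases "even i")
    case True
    then have "i + 1 < 2*N" using i by (auto elim!: evenE)
    then show ?thesis using True i N
      by (simp del: index_mult_mat_vec add: Jmat_index)
  next
    case False
    then have "i \<noteq> 2" "i \<noteq> 0" "0 < i" by (auto intro!: Nat.gr0I)
    then show ?thesis using False i N
      by (simp del: index_mult_mat_vec add: Jmat_index)
  qed
qed simp

lemma key_facts:
  fixes S Si :: "'a::comm_ring_1 mat"
  assumes N: "N \<ge> 1" and S: "symplectic N S" and Si: "Si \<in> carrier_mat (2*N) (2*N)"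
    and SSi: "S * Si = 1\<^sub>m (2*N)" and SiS: "Si * S = 1\<^sub>m (2*N)"
    and f: "f = transpose_mat Si *\<^sub>v unit_vec (2*N) 0"
    and h: "h = S *\<^sub>v unit_vec (2*N) 1"
  shows "f \<in> carrier_vec (2*N)" "h \<in> carrier_vec (2*N)"
    and "\<And>y. y \<in> carrier_vec (2*N) \<Longrightarrow> f \<bullet> y = (Si *\<^sub>v y) $ 0"
    and "\<And>y. y \<in> carrier_vec (2*N) \<Longrightarrow> f \<bullet> y = poisson N y h"
    and "\<And>g. g \<in> carrier_vec (2*N) \<Longrightarrow> poisson N g f = - (g \<bullet> h)"
    and "f \<bullet> h = 0"
proof -
  have Sc: "S \<in> carrier_mat (2*N) (2*N)" using S by (rule sympl_carrier)
  have N0: "0 < 2*N" "1 < 2*N" using N by auto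
  show fc: "f \<in> carrier_vec (2*N)" unfolding f using Si by simp
  show hc: "h \<in> carrier_vec (2*N)" unfolding h using Sc by simp
  have e0: "unit_vec (2*N) 0 \<in> carrier_vec (2*N)" by simp
  have e1: "unit_vec (2*N) 1 \<in> carrier_vec (2*N)" by simp
  show fdot: "f \<bullet> y = (Si *\<^sub>v y) $ 0" if y: "y \<in> carrier_vec (2*N)" for y
  proof -
    have "f \<bullet> y = unit_vec (2*N) 0 \<bullet> (Si *\<^sub>v y)"
      unfolding f by (rule transpose_vec_mult_scalar[OF Si y e0])
    also have "\<dots> = (Si *\<^sub>v y) $ 0" using Si y N0 by simp
    finally show ?thesis .
  qed
  show F1: "f \<bullet> y = poisson N y h" if y: "y \<in> carrier_vec (2*N)" for y
  proof -
    have siy: "Si *\<^sub>v y \<in> carrier_vec (2*N)" using Si y by simp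
    have "poisson N y h = poisson N (S *\<^sub>v (Si *\<^sub>v y)) (S *\<^sub>v unit_vec (2*N) 1)"
      unfolding h using inv_cancel[OF SSi Sc Si y] by simp
    also have "\<dots> = poisson N (Si *\<^sub>v y) (unit_vec (2*N) 1)"
      using S siy e1 unfolding symplectic_def by blast
    also have "\<dots> = (Si *\<^sub>v y) \<bullet> (Jmat N *\<^sub>v unit_vec (2*N) 1)"
      by (rule poisson_J[OF siy e1])
    also have "\<dots> = (Si *\<^sub>v y) \<bullet> unit_vec (2*N) 0"
      by (simp only: Je1[OF N])
    also have "\<dots> = f \<bullet> y" using fdot[OF y] N0 by simp
    finally show ?thesis by simp
  qed
  show "poisson N g f = - (g \<bullet> h)" if g: "g \<in> carrier_vec (2*N)" for g
  proof -
    have Jg: "Jmat N *\<^sub>v g \<in> carrier_vec (2*N)" using g by simp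
    have "poisson N g f = - poisson N f g" by (rule poisson_antisym)
    also have "poisson N f g = f \<bullet> (Jmat N *\<^sub>v g)" by (rule poisson_J[OF fc g])
    also have "\<dots> = poisson N (Jmat N *\<^sub>v g) h" by (rule F1[OF Jg])
    also have "\<dots> = g \<bullet> h" by (rule poisson_Jfirst[OF g hc])
    finally show ?thesis .
  qed
  show "f \<bullet> h = 0"
    using fdot[OF hc] inv_cancel[OF SiS Si Sc e1] N0 unfolding h by simp
qed

theorem theorem5:
  fixes N :: nat
    and ws :: "'a::comm_ring_1 vec list"
    and w :: "'a vec"
    and S T \<Gamma> :: "'a mat"
    and W V0 Vfin :: "'a vec set"
    and f v v0 vfin :: "'a vec"
  assumes ring: "(\<exists>d. is_Zd TYPE('a) d) \<or> is_R TYPE('a)"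
    and N: "N \<ge> 1"
    and ws: "set ws \<subseteq> carrier_vec (2*N)"
    and valid: "valid_state N (lin_span (2*N) ws) w"
    and S: "symplectic N S"
    and T: "symplectic 1 T"
    and W_def: "W = lin_span (2*N) ws"
    and f_def: "f = minv (2*N) (transpose_mat S) *\<^sub>v unit_vec (2*N) 0"
    and v_def: "v = minv 2 (transpose_mat T) *\<^sub>v unit_vec 2 0"
    and V0_def: "V0 = lin_span (2 + 2*N) ((v @\<^sub>v 0\<^sub>v (2*N)) # map (\<lambda>wi. 0\<^sub>v 2 @\<^sub>v wi) ws)"
    and v0_def: "v0 = 0\<^sub>v 2 @\<^sub>v w"
    and Gamma_def: "\<Gamma> = (T \<oplus>\<^sub>m 1\<^sub>m (2*N)) * (1\<^sub>m 2 \<oplus>\<^sub>m S) * Phi N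
              * (1\<^sub>m 2 \<oplus>\<^sub>m minv (2*N) S) * (minv 2 T \<oplus>\<^sub>m 1\<^sub>m (2*N))"
    and Vfin_def: "Vfin = act_space (1 + N) \<Gamma> V0"
    and vfin_def: "vfin = act_vec \<Gamma> v0"
  shows "(\<forall>m \<in> compat (1 + N) Vfin vfin.
            v \<bullet> vec_first m 2 = f \<bullet> vec_last m (2*N))
       \<and> (((\<exists>d. is_Zd TYPE('a) d \<and> prime d) \<or> is_R TYPE('a)) \<longrightarrow>
            (\<lambda>m. vec_last m (2*N)) ` compat (1 + N) Vfin vfin
            = \<Union> {compat N V' v' | vpi V' v'.
                    possible_outcome N W w (lin_span (2*N) [f]) vpi \<and>
                    post_measurement N W w (lin_span (2*N) [f]) vpi V' v'})"
proof -
  have eqN: "2*(1+N) = 2+2*N" by simp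
  have N0: "0 < 2*N" "1 < 2*N" using N by auto
  have Sc: "S \<in> carrier_mat (2*N) (2*N)" using S by (rule sympl_carrier)
  have Tc: "T \<in> carrier_mat 2 2" using sympl_carrier[OF T] by simp
  obtain Si where Sic: "Si \<in> carrier_mat (2*N) (2*N)" and SiS: "Si * S = 1\<^sub>m (2*N)"
    and SSi: "S * Si = 1\<^sub>m (2*N)" using sympl_inv[OF S] by blast
  obtain Ti where Tic: "Ti \<in> carrier_mat 2 2" and TiT: "Ti * T = 1\<^sub>m 2"
    and TTi: "T * Ti = 1\<^sub>m 2" using sympl_inv[OF T] by auto
  have mS: "minv (2*N) S = Si" by (rule minv_eq[OF Sc Sic SSi SiS])
  have mT: "minv 2 T = Ti" by (rule minv_eq[OF Tc Tic TTi TiT])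
  have mSt: "minv (2*N) (transpose_mat S) = transpose_mat Si"
  proof (rule minv_eq)
    show "transpose_mat S * transpose_mat Si = 1\<^sub>m (2*N)"
      using transpose_mult[OF Sic Sc] SiS by simp
    show "transpose_mat Si * transpose_mat S = 1\<^sub>m (2*N)"
      using transpose_mult[OF Sc Sic] SSi by simp
  qed (use Sc Sic in simp_all)
  have mTt: "minv 2 (transpose_mat T) = transpose_mat Ti"
  proof (rule minv_eq)
    show "transpose_mat T * transpose_mat Ti = 1\<^sub>m 2"
      using transpose_mult[OF Tic Tc] TiT by simp
    show "transpose_mat Ti * transpose_mat T = 1\<^sub>m 2"
      using transpose_mult[OF Tc Tic] TTi by simp
  qed (use Tc Tic in simp_all)
  have f_eq: "f = transpose_mat Si *\<^sub>v unit_vec (2*N) 0" using f_def mSt by simp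
  have v_eq: "v = transpose_mat Ti *\<^sub>v unit_vec 2 0" using v_def mTt by simp
  define h where "h = S *\<^sub>v unit_vec (2*N) 1"
  note K = key_facts[OF N S Sic SSi SiS f_eq h_def]
  have fc: "f \<in> carrier_vec (2*N)" and hc: "h \<in> carrier_vec (2*N)" using K(1,2) .
  have vc: "v \<in> carrier_vec 2" unfolding v_eq using Tic by simp
  have vdot: "v \<bullet> x = (Ti *\<^sub>v x) $ 0" if x: "x \<in> carrier_vec 2" for x
  proof -
    have "v \<bullet> x = unit_vec 2 0 \<bullet> (Ti *\<^sub>v x)"
      unfolding v_eq by (rule transpose_vec_mult_scalar[OF Tic x]) simp
    also have "\<dots> = (Ti *\<^sub>v x) $ 0" using Tic x by simp
    finally show ?thesis .
  qed
  have wc: "w \<in> carrier_vec (2*N)" using valid unfolding valid_state_def by simp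
  have Wsub: "submodule (2*N) W" using valid W_def unfolding valid_state_def by simp
  have Wc: "W \<subseteq> carrier_vec (2*N)" using Wsub unfolding submodule_def by simp

  define G where "G = GG N T Ti S Si (-1) 1"
  have Gam: "\<Gamma> = GG N T Ti S Si 1 (-1)"
    unfolding Gamma_def GG_def mS mT Phi_PhiG ..
  have GamC: "\<Gamma> \<in> carrier_mat (2+2*N) (2+2*N)" unfolding Gam by (rule GG_facts(1)[OF N Tc Tic Sc Sic])
  have GC: "G \<in> carrier_mat (2+2*N) (2+2*N)" unfolding G_def by (rule GG_facts(1)[OF N Tc Tic Sc Sic])
  have GGam: "G * \<Gamma> = 1\<^sub>m (2+2*N)" unfolding G_def Gam by (rule GG_inv[OF N Tc Tic Sc Sic TiT TTi SiS SSi])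
  have GamG: "\<Gamma> * G = 1\<^sub>m (2+2*N)" by (rule left_inv_right[OF GamC GC GGam])
  have mG: "minv (2*(1+N)) (transpose_mat \<Gamma>) = transpose_mat G"
    unfolding eqN
  proof (rule minv_eq)
    show "transpose_mat \<Gamma> * transpose_mat G = 1\<^sub>m (2+2*N)"
      using transpose_mult[OF GC GamC] GGam by simp
    show "transpose_mat G * transpose_mat \<Gamma> = 1\<^sub>m (2+2*N)"
      using transpose_mult[OF GamC GC] GamG by simp
  qed (use GC GamC in simp_all)
  have Vfin_eq: "Vfin = (\<lambda>g. transpose_mat G *\<^sub>v g) ` V0"
    unfolding Vfin_def act_space_def mG ..

  define gs0 where "gs0 = (v @\<^sub>v 0\<^sub>v (2*N)) # map (\<lambda>wi. 0\<^sub>v 2 @\<^sub>v wi) ws"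
  have gs0c: "set gs0 \<subseteq> carrier_vec (2+2*N)"
  proof
    fix g assume "g \<in> set gs0"
    then consider "g = v @\<^sub>v 0\<^sub>v (2*N)" | wi where "wi \<in> set ws" "g = 0\<^sub>v 2 @\<^sub>v wi"
      unfolding gs0_def by auto
    then show "g \<in> carrier_vec (2+2*N)"
    proof cases
      case 1 then show ?thesis using append_carrier_vec[OF vc zero_carrier_vec[of "2*N"]] by simp
    next
      case (2 wi)
      then have "wi \<in> carrier_vec (2*N)" using ws by blast
      then show ?thesis using 2 append_carrier_vec[OF zero_carrier_vec[of 2]] by simp
    qed
  qed
  have V0_eq: "V0 = lin_span (2+2*N) gs0" unfolding V0_def gs0_def ..
  have V0c: "V0 \<subseteq> carrier_vec (2+2*N)" unfolding V0_eq using LS_carrier[OF gs0c] by blast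

  have PERP0: "u \<in> perp (1+N) V0 \<longleftrightarrow>
     u \<in> carrier_vec (2+2*N) \<and> v \<bullet> vec_first u 2 = 0 \<and> vec_last u (2*N) \<in> perp N W" for u
  proof (cases "u \<in> carrier_vec (2+2*N)")
    case False then show ?thesis unfolding perp_def eqN by simp
  next
    case True
    define x where "x = vec_first u 2"
    define y where "y = vec_last u (2*N)"
    have x: "x \<in> carrier_vec 2" and y: "y \<in> carrier_vec (2*N)" unfolding x_def y_def by simp_all
    have u: "u = x @\<^sub>v y" unfolding x_def y_def using True by simp
    have d1: "(v @\<^sub>v 0\<^sub>v (2*N)) \<bullet> u = v \<bullet> x"
      unfolding u using scalar_prod_append[OF vc _ x y, of "0\<^sub>v (2*N)"] y by simp
    have d2: "(0\<^sub>v 2 @\<^sub>v wi) \<bullet> u = wi \<bullet> y" if wi: "wi \<in> carrier_vec (2*N)" for wi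
      unfolding u using scalar_prod_append[OF _ wi x y, of "0\<^sub>v 2"] x by simp
    have d3: "\<forall>wi\<in>set ws. (0\<^sub>v 2 @\<^sub>v wi) \<bullet> u = wi \<bullet> y" using d2 ws by blast
    have gen_iff: "(\<forall>g\<in>set gs0. g \<bullet> u = 0) \<longleftrightarrow> v \<bullet> x = 0 \<and> (\<forall>wi\<in>set ws. wi \<bullet> y = 0)"
      unfolding gs0_def using d1 d3 by simp
    have W_iff: "(\<forall>wi\<in>set ws. wi \<bullet> y = 0) \<longleftrightarrow> y \<in> perp N W"
    proof
      assume "\<forall>wi\<in>set ws. wi \<bullet> y = 0"
      then show "y \<in> perp N W" unfolding perp_def W_def using LS_orth[OF ws _ y] y by blast
    next
      assume "y \<in> perp N W"
      then show "\<forall>wi\<in>set ws. wi \<bullet> y = 0" unfolding perp_def W_def using LS_gen[OF ws] by blast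
    qed
    have "u \<in> perp (1+N) V0 \<longleftrightarrow> (\<forall>g\<in>V0. g \<bullet> u = 0)" unfolding perp_def eqN using True by simp
    also have "\<dots> \<longleftrightarrow> (\<forall>g\<in>set gs0. g \<bullet> u = 0)"
      unfolding V0_eq using LS_orth[OF gs0c _ True] LS_gen[OF gs0c] by blast
    finally show ?thesis using gen_iff W_iff True unfolding x_def y_def by simp
  qed

  have COMPAT0: "m \<in> compat (1+N) V0 v0 \<longleftrightarrow>
     (\<exists>x y. m = x @\<^sub>v y \<and> x \<in> carrier_vec 2 \<and> v \<bullet> x = 0 \<and> y \<in> compat N W w)" for m
  proof
    assume "m \<in> compat (1+N) V0 v0"
    then obtain u where u: "u \<in> perp (1+N) V0" and m: "m = u + v0" unfolding compat_def by blast
    define x where "x = vec_first u 2"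
    define y where "y = vec_last u (2*N)"
    have uc: "u \<in> carrier_vec (2+2*N)" and vx: "v \<bullet> x = 0" and yp: "y \<in> perp N W"
      using PERP0[of u] u unfolding x_def y_def by auto
    have x: "x \<in> carrier_vec 2" and y: "y \<in> carrier_vec (2*N)" unfolding x_def y_def by simp_all
    have "u = x @\<^sub>v y" unfolding x_def y_def using uc by simp
    then have "m = (x + 0\<^sub>v 2) @\<^sub>v (y + w)" unfolding m v0_def
      using append_vec_add[OF x _ y wc] by simp
    then have "m = x @\<^sub>v (y + w)" using x by simp
    moreover have "y + w \<in> compat N W w" unfolding compat_def using yp by blast
    ultimately show "\<exists>x y. m = x @\<^sub>v y \<and> x \<in> carrier_vec 2 \<and> v \<bullet> x = 0 \<and> y \<in> compat N W w"
      using x vx by blast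
  next
    assume "\<exists>x y. m = x @\<^sub>v y \<and> x \<in> carrier_vec 2 \<and> v \<bullet> x = 0 \<and> y \<in> compat N W w"
    then obtain x y where m: "m = x @\<^sub>v y" and x: "x \<in> carrier_vec 2" and vx: "v \<bullet> x = 0"
      and yc: "y \<in> compat N W w" by blast
    then obtain y' where yp: "y' \<in> perp N W" and yy: "y = y' + w" unfolding compat_def by blast
    have y': "y' \<in> carrier_vec (2*N)" using yp unfolding perp_def by simp
    have "x @\<^sub>v y' \<in> perp (1+N) V0"
      using PERP0[of "x @\<^sub>v y'"] append_carrier_vec[OF x y'] x y' vx yp by (simp add: vec_first_app vec_last_app)
    moreover have "m = (x @\<^sub>v y') + v0"
      unfolding m yy v0_def using append_vec_add[OF x _ y' wc] x by simp
    ultimately show "m \<in> compat (1+N) V0 v0" unfolding compat_def by blast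
  qed

  have PERPF: "u \<in> perp (1+N) Vfin \<longleftrightarrow> u \<in> carrier_vec (2+2*N) \<and> G *\<^sub>v u \<in> perp (1+N) V0" for u
  proof (cases "u \<in> carrier_vec (2+2*N)")
    case False then show ?thesis unfolding perp_def eqN by simp
  next
    case True
    have "(transpose_mat G *\<^sub>v g) \<bullet> u = g \<bullet> (G *\<^sub>v u)" if "g \<in> V0" for g
      by (rule transpose_vec_mult_scalar[OF GC True]) (use that V0c in blast)
    then show ?thesis unfolding perp_def eqN Vfin_eq using True GC by auto
  qed

  have CF: "compat (1+N) Vfin vfin = (\<lambda>z. \<Gamma> *\<^sub>v z) ` compat (1+N) V0 v0"
  proof safe
    have v0c: "v0 \<in> carrier_vec (2+2*N)" unfolding v0_def using append_carrier_vec[OF zero_carrier_vec[of 2] wc] by simp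
    fix m assume "m \<in> compat (1+N) Vfin vfin"
    then obtain u where u: "u \<in> perp (1+N) Vfin" and m: "m = u + vfin" unfolding compat_def by blast
    have uc: "u \<in> carrier_vec (2+2*N)" and Gu: "G *\<^sub>v u \<in> perp (1+N) V0" using PERPF u by auto
    have "m = \<Gamma> *\<^sub>v (G *\<^sub>v u + v0)"
      unfolding m vfin_def act_vec_def
      using mult_add_distrib_mat_vec[OF GamC _ v0c, of "G *\<^sub>v u"] GC uc inv_cancel[OF GamG GamC GC uc]
      by simp
    moreover have "G *\<^sub>v u + v0 \<in> compat (1+N) V0 v0" unfolding compat_def using Gu by blast
    ultimately show "m \<in> (\<lambda>z. \<Gamma> *\<^sub>v z) ` compat (1+N) V0 v0" by blast
  next
    have v0c: "v0 \<in> carrier_vec (2+2*N)" unfolding v0_def using append_carrier_vec[OF zero_carrier_vec[of 2] wc] by simp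
    fix z assume "z \<in> compat (1+N) V0 v0"
    then obtain u0 where u0: "u0 \<in> perp (1+N) V0" and z: "z = u0 + v0" unfolding compat_def by blast
    have u0c: "u0 \<in> carrier_vec (2+2*N)" using u0 unfolding perp_def eqN by simp
    have "\<Gamma> *\<^sub>v u0 \<in> perp (1+N) Vfin"
      using PERPF[of "\<Gamma> *\<^sub>v u0"] GamC u0c inv_cancel[OF GGam GC GamC u0c] u0 by simp
    moreover have "\<Gamma> *\<^sub>v z = \<Gamma> *\<^sub>v u0 + vfin"
      unfolding z vfin_def act_vec_def by (rule mult_add_distrib_mat_vec[OF GamC u0c v0c])
    ultimately show "\<Gamma> *\<^sub>v z \<in> compat (1+N) Vfin vfin" unfolding compat_def by blast
  qed

  have GV: "\<Gamma> *\<^sub>v (x @\<^sub>v y) =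
      (T *\<^sub>v vec 2 (\<lambda>i. if i = 0 then (Ti *\<^sub>v x)$0 + 1 * (Si *\<^sub>v y)$0 else (Ti *\<^sub>v x)$1)) @\<^sub>v
      (S *\<^sub>v vec (2*N) (\<lambda>j. if j = 1 then (Si *\<^sub>v y)$1 + (-1) * (Ti *\<^sub>v x)$1 else (Si *\<^sub>v y)$j))"
    if x: "x \<in> carrier_vec 2" and y: "y \<in> carrier_vec (2*N)" for x y
    unfolding Gam by (rule GG_facts(2)[OF N Tc Tic Sc Sic x y])
  have FIRST: "v \<bullet> vec_first (\<Gamma> *\<^sub>v (x @\<^sub>v y)) 2 = (Ti *\<^sub>v x)$0 + (Si *\<^sub>v y)$0"
    if x: "x \<in> carrier_vec 2" and y: "y \<in> carrier_vec (2*N)" for x y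
  proof -
    let ?a = "vec 2 (\<lambda>i. if i = 0 then (Ti *\<^sub>v x)$0 + 1 * (Si *\<^sub>v y)$0 else (Ti *\<^sub>v x)$1)"
    have a: "?a \<in> carrier_vec 2" by simp
    have "vec_first (\<Gamma> *\<^sub>v (x @\<^sub>v y)) 2 = T *\<^sub>v ?a"
      unfolding GV[OF x y] by (rule vec_first_app) (use Tc in simp)
    then have "v \<bullet> vec_first (\<Gamma> *\<^sub>v (x @\<^sub>v y)) 2 = (Ti *\<^sub>v (T *\<^sub>v ?a)) $ 0"
      using vdot[of "T *\<^sub>v ?a"] Tc by simp
    also have "\<dots> = ?a $ 0" using inv_cancel[OF TiT Tic Tc a] by simp
    finally show ?thesis by simp
  qed
  have LASTv: "vec_last (\<Gamma> *\<^sub>v (x @\<^sub>v y)) (2*N) =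
      S *\<^sub>v vec (2*N) (\<lambda>j. if j = 1 then (Si *\<^sub>v y)$1 + (-1) * (Ti *\<^sub>v x)$1 else (Si *\<^sub>v y)$j)"
    if x: "x \<in> carrier_vec 2" and y: "y \<in> carrier_vec (2*N)" for x y
    unfolding GV[OF x y] by (rule vec_last_app) (use Sc in simp)
  have fLAST: "f \<bullet> vec_last (\<Gamma> *\<^sub>v (x @\<^sub>v y)) (2*N) = (Si *\<^sub>v y)$0"
    if x: "x \<in> carrier_vec 2" and y: "y \<in> carrier_vec (2*N)" for x y
  proof -
    let ?b = "vec (2*N) (\<lambda>j. if j = 1 then (Si *\<^sub>v y)$1 + (-1) * (Ti *\<^sub>v x)$1 else (Si *\<^sub>v y)$j)"
    have b: "?b \<in> carrier_vec (2*N)" by simp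
    have "f \<bullet> vec_last (\<Gamma> *\<^sub>v (x @\<^sub>v y)) (2*N) = (Si *\<^sub>v (S *\<^sub>v ?b)) $ 0"
      unfolding LASTv[OF x y] using K(3)[of "S *\<^sub>v ?b"] Sc by simp
    also have "\<dots> = ?b $ 0" using inv_cancel[OF SiS Sic Sc b] by simp
    finally show ?thesis using N0 by simp
  qed
  have LAST: "vec_last (\<Gamma> *\<^sub>v (x @\<^sub>v y)) (2*N) = y + (- (Ti *\<^sub>v x)$1) \<cdot>\<^sub>v h"
    if x: "x \<in> carrier_vec 2" and y: "y \<in> carrier_vec (2*N)" for x y
  proof -
    let ?b = "vec (2*N) (\<lambda>j. if j = 1 then (Si *\<^sub>v y)$1 + (-1) * (Ti *\<^sub>v x)$1 else (Si *\<^sub>v y)$j)"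
    let ?c = "- (Ti *\<^sub>v x)$1"
    have e1: "unit_vec (2*N) 1 \<in> carrier_vec (2*N)" by simp
    have sy: "Si *\<^sub>v y \<in> carrier_vec (2*N)" using Sic y by simp
    have "?b = Si *\<^sub>v y + ?c \<cdot>\<^sub>v unit_vec (2*N) 1"
      using Sic N0 by (auto intro!: eq_vecI)
    then have "S *\<^sub>v ?b = S *\<^sub>v (Si *\<^sub>v y) + S *\<^sub>v (?c \<cdot>\<^sub>v unit_vec (2*N) 1)"
      using mult_add_distrib_mat_vec[OF Sc sy, of "?c \<cdot>\<^sub>v unit_vec (2*N) 1"] by simp
    also have "\<dots> = y + ?c \<cdot>\<^sub>v h"
      unfolding h_def inv_cancel[OF SSi Sc Sic y] mult_smult_vec[OF Sc e1] ..
    finally show ?thesis unfolding LASTv[OF x y] .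
  qed

  have part1: "\<forall>m \<in> compat (1 + N) Vfin vfin. v \<bullet> vec_first m 2 = f \<bullet> vec_last m (2*N)"
  proof
    fix m assume "m \<in> compat (1 + N) Vfin vfin"
    then obtain z where z: "z \<in> compat (1+N) V0 v0" and m: "m = \<Gamma> *\<^sub>v z" unfolding CF by blast
    then obtain x y where zxy: "z = x @\<^sub>v y" and x: "x \<in> carrier_vec 2" and vx: "v \<bullet> x = 0"
      and yc: "y \<in> compat N W w" using COMPAT0 by blast
    have y: "y \<in> carrier_vec (2*N)" using compat_carrier[OF wc yc] .
    have "(Ti *\<^sub>v x) $ 0 = 0" using vx vdot[OF x] by simp
    then show "v \<bullet> vec_first m 2 = f \<bullet> vec_last m (2*N)"
      unfolding m zxy using FIRST[OF x y] fLAST[OF x y] by simp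
  qed
  show ?thesis
  proof (intro conjI impI)
    show "\<forall>m \<in> compat (1 + N) Vfin vfin. v \<bullet> vec_first m 2 = f \<bullet> vec_last m (2*N)" by (rule part1)
  next
    assume ring2: "(\<exists>d. is_Zd TYPE('a) d \<and> prime d) \<or> is_R TYPE('a)"
    show "(\<lambda>m. vec_last m (2*N)) ` compat (1 + N) Vfin vfin
            = \<Union> {compat N V' v' | vpi V' v'.
                    possible_outcome N W w (lin_span (2*N) [f]) vpi \<and>
                    post_measurement N W w (lin_span (2*N) [f]) vpi V' v'}"
    proof -
      have FLD: "\<forall>a::'a. a \<noteq> 0 \<longrightarrow> (\<exists>b. a * b = 1)" by (rule field_inv[OF ring2])
      define Vpi where "Vpi = lin_span (2*N) [f]"
      have Vpi_eq: "Vpi = {c \<cdot>\<^sub>v f | c. True}" unfolding Vpi_def by (rule span_single[OF fc])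
      define Cp where "Cp = commuting_part N W Vpi"
      have Cp_eq: "Cp = {g \<in> W. g \<bullet> h = 0}"
      proof safe
        fix g assume "g \<in> Cp"
        then have g: "g \<in> W" and pg: "\<forall>x\<in>Vpi. poisson N g x = 0"
          unfolding Cp_def commuting_part_def by auto
        have "1 \<cdot>\<^sub>v f \<in> Vpi" unfolding Vpi_eq by blast
        then have "poisson N g (1 \<cdot>\<^sub>v f) = 0" using pg by blast
        then have "- (g \<bullet> h) = 0" using poisson_smult_r[OF fc, of g 1] K(5)[of g] g Wc by auto
        then show "g \<bullet> h = 0" by simp
        show "g \<in> W" by (rule g)
      next
        fix g assume g: "g \<in> W" and gh: "g \<bullet> h = 0"
        have "poisson N g x = 0" if xV: "x \<in> Vpi" for x
        proof -
          obtain c where x: "x = c \<cdot>\<^sub>v f" using xV unfolding Vpi_eq by blast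
          show ?thesis unfolding x using poisson_smult_r[OF fc, of g c] K(5)[of g] g Wc gh by auto
        qed
        then show "g \<in> Cp" unfolding Cp_def commuting_part_def using g by blast
      qed
      define V'' where "V'' = {a + b | a b. a \<in> Vpi \<and> b \<in> Cp}"

      have MARG: "(\<lambda>m. vec_last m (2*N)) ` compat (1 + N) Vfin vfin = {y + t \<cdot>\<^sub>v h | y t. y \<in> compat N W w}"
      proof safe
        fix m assume "m \<in> compat (1 + N) Vfin vfin"
        then obtain z where z: "z \<in> compat (1+N) V0 v0" and m: "m = \<Gamma> *\<^sub>v z" unfolding CF by blast
        then obtain x y where zxy: "z = x @\<^sub>v y" and x: "x \<in> carrier_vec 2"
          and yc: "y \<in> compat N W w" using COMPAT0 by blast
        have y: "y \<in> carrier_vec (2*N)" using compat_carrier[OF wc yc] .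
        show "\<exists>y t. vec_last m (2*N) = y + t \<cdot>\<^sub>v h \<and> y \<in> compat N W w"
          unfolding m zxy LAST[OF x y] using yc by blast
      next
        fix y and t :: 'a assume yc: "y \<in> compat N W w"
        have y: "y \<in> carrier_vec (2*N)" using compat_carrier[OF wc yc] .
        define a where "a = vec 2 (\<lambda>i. if i = 0 then 0 else - t)"
        have a: "a \<in> carrier_vec 2" unfolding a_def by simp
        define x where "x = T *\<^sub>v a"
        have x: "x \<in> carrier_vec 2" unfolding x_def using Tc a by simp
        have Tix: "Ti *\<^sub>v x = a" unfolding x_def by (rule inv_cancel[OF TiT Tic Tc a])
        have vx: "v \<bullet> x = 0" using vdot[OF x] Tix unfolding a_def by simp
        have "x @\<^sub>v y \<in> compat (1+N) V0 v0" using COMPAT0 x vx yc by blast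
        then have "\<Gamma> *\<^sub>v (x @\<^sub>v y) \<in> compat (1 + N) Vfin vfin" unfolding CF by blast
        moreover have "vec_last (\<Gamma> *\<^sub>v (x @\<^sub>v y)) (2*N) = y + t \<cdot>\<^sub>v h"
          unfolding LAST[OF x y] Tix unfolding a_def by simp
        ultimately show "y + t \<cdot>\<^sub>v h \<in> (\<lambda>m. vec_last m (2*N)) ` compat (1 + N) Vfin vfin"
          by (metis image_eqI)
      qed

      have UNI: "\<Union> {compat N V' v' | vpi V' v'.
                    possible_outcome N W w Vpi vpi \<and> post_measurement N W w Vpi vpi V' v'}
               = {y + t \<cdot>\<^sub>v h | y t. y \<in> compat N W w}"
      proof safe
        fix m V' v' vpi
        assume mc: "m \<in> compat N V' v'" and po: "possible_outcome N W w Vpi vpi"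
          and pm: "post_measurement N W w Vpi vpi V' v'"
        have V': "V' = V''" and v'1: "v' \<in> compat N Cp w"
          using pm unfolding post_measurement_def V''_def Cp_def by auto
        obtain u2 where u2: "u2 \<in> perp N Cp" and v': "v' = u2 + w" using v'1 unfolding compat_def by blast
        obtain u where u: "u \<in> perp N V''" and m: "m = u + v'" using mc V' unfolding compat_def by blast
        have u2c: "u2 \<in> carrier_vec (2*N)" and uc: "u \<in> carrier_vec (2*N)"
          using u u2 unfolding perp_def by auto
        define d where "d = u + u2"
        have dc: "d \<in> carrier_vec (2*N)" unfolding d_def using uc u2c by simp
        have md: "m = d + w" unfolding m v' d_def using uc u2c wc by (auto intro!: eq_vecI simp: add.assoc)
        have dC: "g \<bullet> d = 0" if g: "g \<in> W" and gh: "g \<bullet> h = 0" for g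
        proof -
          have gc: "g \<in> carrier_vec (2*N)" using g Wc by blast
          have gC: "g \<in> Cp" unfolding Cp_eq using g gh by blast
          have "0 \<cdot>\<^sub>v f \<in> Vpi" unfolding Vpi_eq by blast
          moreover have "0 \<cdot>\<^sub>v f + g = g" using gc fc by (auto intro!: eq_vecI)
          ultimately have "g \<in> V''" unfolding V''_def using gC by (metis (mono_tags, lifting) mem_Collect_eq)
          then have "g \<bullet> u = 0" using u unfolding perp_def by blast
          moreover have "g \<bullet> u2 = 0" using u2 gC unfolding perp_def by blast
          ultimately show ?thesis unfolding d_def using scalar_prod_add_distrib[OF gc uc u2c] by simp
        qed
        have "\<exists>t. \<forall>g\<in>W. g \<bullet> d = t * (g \<bullet> h)"
        proof (cases "\<forall>g\<in>W. g \<bullet> h = 0")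
          case True then show ?thesis using dC by (intro exI[of _ 0]) auto
        next
          case False
          then obtain g0 where g0: "g0 \<in> W" and g0h: "g0 \<bullet> h \<noteq> 0" by blast
          then obtain ai where ai: "(g0 \<bullet> h) * ai = 1" using FLD by blast
          have g0c: "g0 \<in> carrier_vec (2*N)" using g0 Wc by blast
          show ?thesis
          proof (intro exI[of _ "(g0 \<bullet> d) * ai"] ballI)
            fix g assume g: "g \<in> W"
            have gc: "g \<in> carrier_vec (2*N)" using g Wc by blast
            let ?c = "- ((g \<bullet> h) * ai)"
            have g'W: "g + ?c \<cdot>\<^sub>v g0 \<in> W" using Wsub g g0 unfolding submodule_def by blast
            have "(g + ?c \<cdot>\<^sub>v g0) \<bullet> h = g \<bullet> h + ?c * (g0 \<bullet> h)"
              using add_scalar_prod_distrib[OF gc _ hc, of "?c \<cdot>\<^sub>v g0"] g0c hc by simp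
            also have "\<dots> = g \<bullet> h - (g \<bullet> h) * ((g0 \<bullet> h) * ai)" by (simp add: algebra_simps)
            also have "\<dots> = 0" using ai by simp
            finally have "(g + ?c \<cdot>\<^sub>v g0) \<bullet> d = 0" using dC[OF g'W] by simp
            moreover have "(g + ?c \<cdot>\<^sub>v g0) \<bullet> d = g \<bullet> d + ?c * (g0 \<bullet> d)"
              using add_scalar_prod_distrib[OF gc _ dc, of "?c \<cdot>\<^sub>v g0"] g0c dc by simp
            ultimately show "g \<bullet> d = (g0 \<bullet> d) * ai * (g \<bullet> h)"
              by (simp add: algebra_simps add_eq_0_iff2)
          qed
        qed
        then obtain t where t: "\<And>g. g \<in> W \<Longrightarrow> g \<bullet> d = t * (g \<bullet> h)" by blast
        have p: "d + (- t) \<cdot>\<^sub>v h \<in> perp N W"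
        proof -
          have "g \<bullet> (d + (- t) \<cdot>\<^sub>v h) = 0" if g: "g \<in> W" for g
          proof -
            have gc: "g \<in> carrier_vec (2*N)" using g Wc by blast
            have "g \<bullet> (d + (- t) \<cdot>\<^sub>v h) = g \<bullet> d + (- t) * (g \<bullet> h)"
              using scalar_prod_add_distrib[OF gc dc, of "(- t) \<cdot>\<^sub>v h"] hc gc by simp
            then show ?thesis using t[OF g] by simp
          qed
          then show ?thesis unfolding perp_def using dc hc by simp
        qed
        have "m = ((d + (- t) \<cdot>\<^sub>v h) + w) + t \<cdot>\<^sub>v h"
          unfolding md using dc hc wc by (auto intro!: eq_vecI simp: algebra_simps)
        moreover have "(d + (- t) \<cdot>\<^sub>v h) + w \<in> compat N W w" unfolding compat_def using p by blast
        ultimately show "\<exists>y t. m = y + t \<cdot>\<^sub>v h \<and> y \<in> compat N W w" by blast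
      next
        fix y and t :: 'a assume yc: "y \<in> compat N W w"
        obtain u0 where u0: "u0 \<in> perp N W" and yy: "y = u0 + w" using yc unfolding compat_def by blast
        have u0c: "u0 \<in> carrier_vec (2*N)" using u0 unfolding perp_def by simp
        let ?m = "y + t \<cdot>\<^sub>v h"
        have yc2: "y \<in> carrier_vec (2*N)" unfolding yy using u0c wc by simp
        have mc: "?m \<in> carrier_vec (2*N)" using yc2 hc by simp
        have zp: "0\<^sub>v (2*N) \<in> perp N V" for V unfolding perp_def by simp
        have m_self: "?m \<in> compat N V ?m" for V
          unfolding compat_def using zp[of V] mc by (metis (mono_tags, lifting) left_zero_vec mem_Collect_eq)
        have hp: "(- t) \<cdot>\<^sub>v h \<in> perp N Vpi"
        proof -
          have "x \<bullet> ((- t) \<cdot>\<^sub>v h) = 0" if xV: "x \<in> Vpi" for x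
          proof -
            obtain c where x: "x = c \<cdot>\<^sub>v f" using xV unfolding Vpi_eq by blast
            show ?thesis unfolding x using fc hc K(6) by simp
          qed
          then show ?thesis unfolding perp_def using hc by simp
        qed
        have "y = (- t) \<cdot>\<^sub>v h + ?m" using yc2 hc by (auto intro!: eq_vecI)
        then have "y \<in> compat N Vpi ?m" unfolding compat_def using hp by blast
        then have po: "possible_outcome N W w Vpi ?m"
          unfolding possible_outcome_def using mc yc by blast
        have up: "u0 + t \<cdot>\<^sub>v h \<in> perp N Cp"
        proof -
          have "g \<bullet> (u0 + t \<cdot>\<^sub>v h) = 0" if g: "g \<in> Cp" for g
          proof -
            have gW: "g \<in> W" and gh: "g \<bullet> h = 0" using g unfolding Cp_eq by auto
            have gc: "g \<in> carrier_vec (2*N)" using gW Wc by blast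
            have "g \<bullet> u0 = 0" using u0 gW unfolding perp_def by blast
            then show ?thesis using scalar_prod_add_distrib[OF gc u0c, of "t \<cdot>\<^sub>v h"] hc gc gh by simp
          qed
          then show ?thesis unfolding perp_def using u0c hc by simp
        qed
        have "?m = (u0 + t \<cdot>\<^sub>v h) + w" unfolding yy using u0c hc wc by (auto intro!: eq_vecI simp: algebra_simps)
        then have "?m \<in> compat N Cp w" unfolding compat_def using up by blast
        then have pm: "post_measurement N W w Vpi ?m V'' ?m"
          unfolding post_measurement_def V''_def Cp_def using m_self by blast
        have "compat N V'' ?m \<in> {compat N V' v' | vpi V' v'.
                    possible_outcome N W w Vpi vpi \<and> post_measurement N W w Vpi vpi V' v'}"
          using po pm by blast
        then show "?m \<in> \<Union> {compat N V' v' | vpi V' v'.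
                    possible_outcome N W w Vpi vpi \<and> post_measurement N W w Vpi vpi V' v'}"
          using m_self by blast
      qed
      show ?thesis using MARG UNI unfolding Vpi_def by simp
    qed
  qed
qed

end
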